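(* Let $\alpha\in(0,1]$. For all $n$ such that $n^\alpha=2^q$ for a positive integer $q$, the sparse grid $B_n$ satisfies $|B_n|=O(n^{2-\alpha}\log n)$.
   Context: Assume $n^\alpha=2^q$ with $q$ a positive integer (so $n^\alpha$ is an integer). Let $A_n=\{(i,j)\in\mathbb{Z}^2: 0\le i,j\le 14n\}$. The sparse grid $B_n\subseteq A_n$ is the set of points of $A_n$ of at least one of the following forms: (1) $(i,j)$ with $n^\alpha \mid ij$; (2) $(i+k,j+k)$ with $n^\alpha\mid i$, $n^\alpha\mid j$ and $k\in\{1,2,\dots,n^\alpha\}$ (points on forward diagonals); (3) $(i+k,j-k)$ with $n^\alpha\mid i$, $n^\alpha\mid j$ and $k\in\{1,2,\dots,n^\alpha\}$ (points on backward diagonals). *)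

theory Defs
  imports Complex_Main
begin

definition A_grid :: "nat \<Rightarrow> (int \<times> int) set" where
  "A_grid n = {(i, j). 0 \<le> i \<and> i \<le> 14 * int n \<and> 0 \<le> j \<and> j \<le> 14 * int n}"

text \<open>The sparse grid B_n, where m stands for the integer n^alpha.\<close>
definition sparse_grid :: "nat \<Rightarrow> nat \<Rightarrow> (int \<times> int) set" where
  "sparse_grid n m = {p \<in> A_grid n.
     (\<exists>i j. p = (i, j) \<and> int m dvd i * j)
   \<or> (\<exists>i j k. int m dvd i \<and> int m dvd j \<and> 1 \<le> k \<and> k \<le> int m \<and> p = (i + k, j + k))
   \<or> (\<exists>i j k. int m dvd i \<and> int m dvd j \<and> 1 \<le> k \<and> k \<le> int m \<and> p = (i + k, j - k))}"

end

theory Submission imports Defs begin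

lemma count_mult:
  fixes a b d :: int
  assumes "0 < d" "a \<le> b"
  shows "finite {i. a \<le> i \<and> i \<le> b \<and> d dvd i}"
    "real (card {i. a \<le> i \<and> i \<le> b \<and> d dvd i}) \<le> (b - a) / d + 2"
proof -
  let ?S = "{i. a \<le> i \<and> i \<le> b \<and> d dvd i}"
  show "finite ?S" by (rule finite_subset[of _ "{a..b}"]) auto
  have sub: "?S \<subseteq> (\<lambda>t. d*t) ` {a div d .. b div d}"
  proof
    fix i assume "i \<in> ?S"
    then obtain t where t: "i = d*t" "a \<le> i" "i \<le> b" by auto
    have "a div d \<le> t" using zdiv_mono1[OF t(2) assms(1)] t(1) assms(1) by simp
    moreover have "t \<le> b div d" using zdiv_mono1[OF t(3) assms(1)] t(1) assms(1) by simp
    ultimately show "i \<in> (\<lambda>t. d*t) ` {a div d .. b div d}" using t by auto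
  qed
  have "card ?S \<le> card {a div d .. b div d}"
    by (rule order_trans[OF card_mono[OF _ sub] card_image_le]) auto
  also have "\<dots> = nat (b div d + 1 - a div d)" by simp
  finally have c: "real (card ?S) \<le> real (nat (b div d + 1 - a div d))" by linarith
  have fb: "real_of_int (b div d) \<le> b / d"
    using floor_divide_of_int_eq[of b d] of_int_floor_le[of "b/d"] by (metis of_int_of_nat_eq)
  have fa: "real_of_int (a div d) > a / d - 1"
    using floor_divide_of_int_eq[of a d] real_of_int_floor_gt_diff_one[of "a/d"] by (metis of_int_of_nat_eq)
  have "a / d \<le> b / d" using assms by (simp add: divide_right_mono)
  have "real (nat (b div d + 1 - a div d)) = real_of_int (b div d + 1 - a div d)"
    using zdiv_mono1[OF assms(2) assms(1)] by (intro of_nat_nat) simp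
  also have "\<dots> \<le> (b - a)/d + 2" using fa fb by (simp add: diff_divide_distrib)
  finally show "real (card ?S) \<le> (b - a) / d + 2" using c by linarith
qed

lemma cover:
  fixes i j :: int
  shows "2^q dvd i*j \<Longrightarrow> \<exists>k\<le>q. 2^k dvd i \<and> 2^(q-k) dvd j"
proof (induction q arbitrary: i)
  case 0 then show ?case by auto
next
  case (Suc q)
  show ?case
  proof (cases "even i")
    case True
    then obtain i' where i': "i = 2*i'" by auto
    have "2^q dvd i'*j" using Suc.prems i' by (simp add: mult.assoc)
    then obtain k where "k \<le> q" "2^k dvd i'" "2^(q-k) dvd j" using Suc.IH by blast
    then show ?thesis using i' by (intro exI[of _ "Suc k"]) auto
  next
    case False
    have "coprime ((2::int)^Suc q) i" using False by simp
    then have "2^Suc q dvd j" using Suc.prems coprime_dvd_mult_right_iff by blast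
    then show ?thesis by (intro exI[of _ 0]) auto
  qed
qed


lemma prod_bound:
  fixes N :: real and q k :: nat
  assumes "k \<le> q" "0 \<le> N"
  shows "(N / 2^k + 2) * (N / 2^(q-k) + 2) \<le> N^2 / 2^q + 4*N + 4"
proof -
  have d: "N / 2^j \<le> N" for j :: nat
    using mult_left_mono[of 1 "2^j::real" N] assms(2) by (simp add: divide_le_eq)
  have e: "(2::real)^k * 2^(q-k) = 2^q" using assms by (simp add: power_add[symmetric])
  have "(N / 2^k + 2) * (N / 2^(q-k) + 2) = N^2/(2^k*2^(q-k)) + 2*(N/2^k) + 2*(N/2^(q-k)) + 4"
    by (simp add: field_simps power2_eq_square)
  also have "\<dots> = N^2/2^q + 2*(N/2^k) + 2*(N/2^(q-k)) + 4" using e by simp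
  also have "\<dots> \<le> N^2/2^q + 2*N + 2*N + 4"
    using d[of k] d[of "q-k"] by linarith
  finally show ?thesis by simp
qed

lemma comb: "(a::real) \<le> b + c + d \<Longrightarrow> b \<le> X \<Longrightarrow> c \<le> Y \<Longrightarrow> d \<le> Y \<Longrightarrow> a \<le> X + 2*Y"
  by linarith

lemma card_bound:
  fixes n q :: nat
  defines "N \<equiv> 14 * real n" and "M \<equiv> (2::real)^q"
  shows "real (card (sparse_grid n (2^q))) \<le> (real q+1) * (N^2/M + 4*N + 4) + 2 * (N^2/M + 8*N + 16*M)"
proof -
  define m :: int where "m = 2^q"
  define NI :: int where "NI = 14 * int n"
  have NI: "real_of_int NI = N" unfolding NI_def N_def by simp
  have mM: "real_of_int m = M" unfolding m_def M_def by simp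
  have mpos: "0 < m" unfolding m_def by simp
  define A where "A k = {i. 0 \<le> i \<and> i \<le> NI \<and> (2::int)^k dvd i}" for k
  define S1 where "S1 k = A k \<times> A (q-k)" for k
  define D where "D = {i. -m \<le> i \<and> i \<le> NI + m \<and> m dvd i}"
  define f2 where "f2 = (\<lambda>(i::int,j::int,k::int). (i+k, j+k))"
  define f3 where "f3 = (\<lambda>(i::int,j::int,k::int). (i+k, j-k))"
  have sub: "sparse_grid n (2^q) \<subseteq> (\<Union>k\<in>{..q}. S1 k) \<union> f2 ` (D \<times> D \<times> {1..m}) \<union> f3 ` (D \<times> D \<times> {1..m})"
  proof
    fix p assume p: "p \<in> sparse_grid n (2^q)"
    obtain x y where xy: "p = (x,y)" by fastforce
    have inA: "0 \<le> x" "x \<le> NI" "0 \<le> y" "y \<le> NI"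
      using p xy unfolding sparse_grid_def A_grid_def NI_def by auto
    have "int (2^q) = m" unfolding m_def by simp
    then consider "m dvd x*y"
      | i j k where "m dvd i" "m dvd j" "1 \<le> k" "k \<le> m" "p = (i+k, j+k)"
      | i j k where "m dvd i" "m dvd j" "1 \<le> k" "k \<le> m" "p = (i+k, j-k)"
      using p xy unfolding sparse_grid_def by auto
    then show "p \<in> (\<Union>k\<in>{..q}. S1 k) \<union> f2 ` (D \<times> D \<times> {1..m}) \<union> f3 ` (D \<times> D \<times> {1..m})"
    proof cases
      case 1
      then obtain k where "k \<le> q" "2^k dvd x" "2^(q-k) dvd y" using cover[of q x y] m_def by auto
      then have "p \<in> S1 k" using inA xy unfolding S1_def A_def by auto
      then show ?thesis using \<open>k \<le> q\<close> by blast
    next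
      case (2 i j k)
      have "i \<in> D" "j \<in> D" using 2 inA xy unfolding D_def by auto
      then have "p \<in> f2 ` (D \<times> D \<times> {1..m})" using 2 unfolding f2_def
        by (intro image_eqI[of _ _ "(i,j,k)"]) auto
      then show ?thesis by blast
    next
      case (3 i j k)
      have "i \<in> D" "j \<in> D" using 3 inA xy unfolding D_def by auto
      then have "p \<in> f3 ` (D \<times> D \<times> {1..m})" using 3 unfolding f3_def
        by (intro image_eqI[of _ _ "(i,j,k)"]) auto
      then show ?thesis by blast
    qed
  qed
  have finA: "finite (A k)" for k unfolding A_def using count_mult(1)[of "2^k" 0 NI] NI_def by simp
  have cA: "real (card (A k)) \<le> N / 2^k + 2" for k
    unfolding A_def using count_mult(2)[of "2^k" 0 NI] NI NI_def by simp
  have finD: "finite D" unfolding D_def using count_mult(1)[of m "-m" "NI+m"] mpos NI_def by simp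
  have cD: "real (card D) \<le> N / M + 4"
  proof -
    have "real (card D) \<le> ((NI+m) - (-m))/m + 2" unfolding D_def
      using count_mult(2)[of m "-m" "NI+m"] mpos NI_def by simp
    also have "\<dots> = N/M + 4" using NI mM mpos by (simp add: field_simps)
    finally show ?thesis .
  qed
  have N0: "0 \<le> N" unfolding N_def by simp
  have M0: "0 < M" unfolding M_def by simp
  have fin1: "finite (\<Union>k\<in>{..q}. S1 k)" unfolding S1_def using finA by auto
  have fin2: "finite (D \<times> D \<times> {1..m})" using finD by auto
  have c1: "real (card (\<Union>k\<in>{..q}. S1 k)) \<le> (real q+1) * (N^2/M + 4*N + 4)"
  proof -
    have "card (\<Union>k\<in>{..q}. S1 k) \<le> (\<Sum>k\<in>{..q}. card (S1 k))" by (rule card_UN_le) simp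
    then have "real (card (\<Union>k\<in>{..q}. S1 k)) \<le> (\<Sum>k\<in>{..q}. real (card (S1 k)))"
      by (metis of_nat_le_iff of_nat_sum)
    also have "\<dots> \<le> (\<Sum>k\<in>{..q}. N^2/M + 4*N + 4)"
    proof (rule sum_mono)
      fix k assume "k \<in> {..q}"
      have "real (card (S1 k)) = real (card (A k)) * real (card (A (q-k)))"
        unfolding S1_def by (simp add: card_cartesian_product)
      also have "\<dots> \<le> (N / 2^k + 2) * (N / 2^(q-k) + 2)"
        using cA N0 by (intro mult_mono) auto
      also have "\<dots> \<le> N^2/M + 4*N + 4" unfolding M_def using prod_bound \<open>k \<in> {..q}\<close> N0 by auto
      finally show "real (card (S1 k)) \<le> N^2/M + 4*N + 4" .
    qed
    finally show ?thesis by (simp add: add.commute)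
  qed
  have cimg: "real (card (f ` (D \<times> D \<times> {1..m}))) \<le> N^2/M + 8*N + 16*M" for f :: "int\<times>int\<times>int \<Rightarrow> int\<times>int"
  proof -
    have "card (f ` (D \<times> D \<times> {1..m})) \<le> card (D \<times> D \<times> {1..m})" by (rule card_image_le[OF fin2])
    also have "\<dots> = card D * card D * nat m" by (simp add: card_cartesian_product)
    finally have "real (card (f ` (D \<times> D \<times> {1..m}))) \<le> real (card D) * real (card D) * M"
      using mM mpos by (metis of_int_of_nat_eq of_nat_le_iff of_nat_mult zero_less_imp_eq_int nat_int less_imp_le)
    also have "\<dots> \<le> (N/M + 4) * (N/M + 4) * M" using cD M0 by (intro mult_mono) auto
    also have "\<dots> = N^2/M + 8*N + 16*M" using M0 by (simp add: field_simps power2_eq_square)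
    finally show ?thesis .
  qed
  have "card (sparse_grid n (2^q)) \<le> card ((\<Union>k\<in>{..q}. S1 k) \<union> f2 ` (D \<times> D \<times> {1..m}) \<union> f3 ` (D \<times> D \<times> {1..m}))"
    by (rule card_mono[OF _ sub]) (use fin1 fin2 in auto)
  also have "\<dots> \<le> card (\<Union>k\<in>{..q}. S1 k) + card (f2 ` (D \<times> D \<times> {1..m})) + card (f3 ` (D \<times> D \<times> {1..m}))"
    by (metis (no_types, lifting) add_mono card_Un_le le_refl order_trans)
  finally have "real (card (sparse_grid n (2^q))) \<le> real (card (\<Union>k\<in>{..q}. S1 k)) + real (card (f2 ` (D \<times> D \<times> {1..m}))) + real (card (f3 ` (D \<times> D \<times> {1..m})))"
    by linarith
  from comb[OF this c1 cimg[of f2] cimg[of f3]] show ?thesis .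
qed


theorem lemma3:
  fixes \<alpha> :: real
  assumes "0 < \<alpha>" and "\<alpha> \<le> 1"
  shows "\<exists>C. \<forall>(n::nat) (q::nat). 0 < q \<and> real n powr \<alpha> = 2 ^ q \<longrightarrow>
           real (card (sparse_grid n (2 ^ q))) \<le> C * real n powr (2 - \<alpha>) * ln (real n)"
proof (intro exI[of _ "2000 / ln 2"] allI impI, elim conjE)
  fix n q :: nat
  assume q0: "0 < q" and h: "real n powr \<alpha> = 2 ^ q"
  define x where "x = real n"
  have "n \<noteq> 0" proof assume "n = 0" then show False using h by simp qed
  moreover have "n \<noteq> 1"
  proof
    assume "n = 1"
    then have "(2::real)^q = 1" using h by simp
    then have "q = 0" using power_eq_1_iff[of "2::real" q] by simp
    then show False using q0 by simp
  qed
  ultimately have x1: "1 < x" unfolding x_def by simp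
  define P where "P = x powr (2 - \<alpha>)"
  define N where "N = 14 * real n"
  define M where "M = (2::real)^q"
  have M: "M = x powr \<alpha>" using h unfolding M_def x_def by simp
  have M0: "0 < M" unfolding M_def by simp
  have "N^2/M = 196 * (x powr 2 / x powr \<alpha>)" unfolding N_def x_def M
    using x1 by (simp add: power2_eq_square powr_realpow x_def)
  also have "\<dots> = 196 * P" unfolding P_def using x1 by (simp add: powr_diff)
  finally have e1: "N^2/M = 196 * P" .
  have "x = x powr 1" using x1 by simp
  also have "\<dots> \<le> P" unfolding P_def using x1 assms by (intro powr_mono) auto
  finally have xP: "x \<le> P" .
  have MP: "M \<le> P" unfolding M P_def using x1 assms by (intro powr_mono) auto
  have P1: "1 \<le> P" using xP x1 by simp
  have NP: "N \<le> 14 * P" using xP unfolding N_def x_def by simp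
  have cb: "real (card (sparse_grid n (2^q))) \<le> (real q+1) * (N^2/M + 4*N + 4) + 2 * (N^2/M + 8*N + 16*M)"
    using card_bound[of n q] unfolding N_def M_def by simp
  have a1: "(real q+1) * (N^2/M + 4*N + 4) \<le> (real q+1) * (256 * P)"
    using e1 NP P1 by (intro mult_left_mono) auto
  have a2: "2 * (N^2/M + 8*N + 16*M) \<le> 648 * P" unfolding e1 using NP MP by (simp add: algebra_simps)
  have q1: "real q \<ge> 1" using q0 by simp
  have P0: "0 \<le> P" using P1 by simp
  have a3: "P \<le> real q * P" using mult_right_mono[OF q1 P0] by simp
  have a4: "(real q+1) * (256 * P) = 256 * (real q * P) + 256 * P" by (simp add: algebra_simps)
  have a5: "2000 * real q * P = 2000 * (real q * P)" by simp
  have c2: "real (card (sparse_grid n (2^q))) \<le> 2000 * real q * P"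
    unfolding a5 using cb a1 a2 a3 a4 by linarith
  have "ln M = \<alpha> * ln x" unfolding M using x1 by (simp add: ln_powr)
  moreover have "ln M = real q * ln 2" unfolding M_def by (simp add: ln_realpow)
  moreover have "\<alpha> * ln x \<le> 1 * ln x" using assms x1 by (intro mult_right_mono) auto
  ultimately have "real q * ln 2 \<le> ln x" by simp
  then have qb: "real q \<le> ln x / ln 2" by (simp add: le_divide_eq)
  have "2000 * real q * P \<le> 2000 * (ln x / ln 2) * P" using qb P1 by (intro mult_right_mono mult_left_mono) auto
  also have "\<dots> = 2000 / ln 2 * real n powr (2 - \<alpha>) * ln (real n)" unfolding P_def x_def by simp
  finally show "real (card (sparse_grid n (2^q))) \<le> 2000 / ln 2 * real n powr (2 - \<alpha>) * ln (real n)"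
    using c2 by linarith
qed

end
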